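(* Let $t\ge0$, let $R^*>1$ be such that for every $R\in(1,R^*]$ the function $\eta=\eta_R$ (defined in the context) satisfies $\eta(r)\ge\frac23$ on $[1,R]$, and let $1<R\le R^*$. Let $h$ be a minimizer of $E$ over $\mathcal A_h$. Then \[ \frac23\le\eta(r)\le h(r)\le 1\qquad\text{for }1\le r\le R. \]
   Context: $\eta_R(r)=\frac{1}{R^5-1}\left[(R^3-1)r^2+(R^2-1)\left(\frac{R}{r}\right)^3\right]$ for $r\in[1,R]$. For $t\ge0$ put $h_+=\frac{3+\sqrt{9+8t}}{4}$ and \[ E[h]=\int_1^R \frac{r^2}{2}(h')^2+3h^2+r^2\left[\frac t8(1-h^2)^2+\frac{h_+}{8}(1+3h^4-4h^3)\right]dr, \] $\mathcal A_h=\{h\in L^2(1,R): h'\in L^2((1,R);r^2dr),\ h(1)=h(R)=1\}$. A minimizer $h$ solves $h''+\frac2rh'-\frac6{r^2}h=hf(h)$ with $f(h)=\frac t2(h^2-1)+\frac{3h_+}{2}(h^2-h)$. *)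

theory Defs
  imports "HOL-Analysis.Analysis"
begin

definition eta :: "real \<Rightarrow> real \<Rightarrow> real" where
  "eta R r = 1 / (R^5 - 1) * ((R^3 - 1) * r^2 + (R^2 - 1) * (R / r)^3)"

definition hplus :: "real \<Rightarrow> real" where
  "hplus t = (3 + sqrt (9 + 8 * t)) / 4"

text \<open>Energy of h, where g is (a representative of) the derivative h'.\<close>
definition energy :: "real \<Rightarrow> real \<Rightarrow> (real \<Rightarrow> real) \<Rightarrow> (real \<Rightarrow> real) \<Rightarrow> real" where
  "energy t R h g = (LINT r:{1..R}|lborel.
      r^2 / 2 * (g r)^2 + 3 * (h r)^2
      + r^2 * (t / 8 * (1 - (h r)^2)^2 + hplus t / 8 * (1 + 3 * (h r)^4 - 4 * (h r)^3)))"

text \<open>(h, g) describes an element of the admissible class A_h: h (its continuous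
  representative) is the indefinite integral of g on [1,R], h is in L^2(1,R),
  g = h' is in L^2((1,R); r^2 dr), and h(1) = h(R) = 1.\<close>
definition admissible :: "real \<Rightarrow> (real \<Rightarrow> real) \<Rightarrow> (real \<Rightarrow> real) \<Rightarrow> bool" where
  "admissible R h g \<longleftrightarrow>
     set_integrable lborel {1..R} g \<and>
     (\<forall>x\<in>{1..R}. h x = h 1 + (LINT r:{1..x}|lborel. g r)) \<and>
     set_integrable lborel {1..R} (\<lambda>r. (h r)^2) \<and>
     set_integrable lborel {1..R} (\<lambda>r. r^2 * (g r)^2) \<and>
     h 1 = 1 \<and> h R = 1"

definition is_minimizer :: "real \<Rightarrow> real \<Rightarrow> (real \<Rightarrow> real) \<Rightarrow> bool" where
  "is_minimizer t R h \<longleftrightarrow>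
     (\<exists>g. admissible R h g \<and>
        (\<forall>k gk. admissible R k gk \<longrightarrow> energy t R h g \<le> energy t R k gk))"

end

theory Submission
  imports Defs
begin


definition W :: "real \<Rightarrow> real \<Rightarrow> real" where
  "W t x = t / 8 * (1 - x^2)^2 + hplus t / 8 * (1 + 3 * x^4 - 4 * x^3)"

definition L :: "real \<Rightarrow> (real \<Rightarrow> real) \<Rightarrow> (real \<Rightarrow> real) \<Rightarrow> real \<Rightarrow> real" where
  "L t h g r = r^2 / 2 * (g r)^2 + 3 * (h r)^2 + r^2 * W t (h r)"

lemma energy_L: "energy t R h g = (LINT r:{1..R}|lborel. L t h g r)"
  unfolding energy_def L_def W_def by simp

lemma hplus_pos: "t \<ge> 0 \<Longrightarrow> hplus t \<ge> 3/2"
proof -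
  assume "t \<ge> 0"
  then have "sqrt (9 + 8*t) \<ge> 3" by (simp add: real_le_rsqrt)
  then show ?thesis unfolding hplus_def by simp
qed

lemma adm_hk:
  assumes "admissible R h g" "1 \<le> R"
  shows "g integrable_on {1..R}" "\<And>x. x \<in> {1..R} \<Longrightarrow> h x = 1 + integral {1..x} g"
    "h 1 = 1" "h R = 1"
proof -
  have gi: "set_integrable lborel {1..R} g" using assms unfolding admissible_def by auto
  show "g integrable_on {1..R}" using set_borel_integral_eq_integral(1)[OF gi] .
  show "h 1 = 1" "h R = 1" using assms unfolding admissible_def by auto
  fix x assume x: "x \<in> {1..R}"
  have "set_integrable lborel {1..x} g"
    by (rule set_integrable_subset[OF gi]) (use x in auto)
  then show "h x = 1 + integral {1..x} g"
    using assms x set_borel_integral_eq_integral(2) unfolding admissible_def by metis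
qed

lemma adm_cont:
  assumes "admissible R h g" "1 \<le> R"
  shows "continuous_on {1..R} h"
proof -
  have "continuous_on {1..R} (\<lambda>x. 1 + integral {1..x} g)"
    by (intro continuous_intros indefinite_integral_continuous_1 adm_hk[OF assms])
  then show ?thesis
    by (rule continuous_on_eq) (use adm_hk(2)[OF assms] in auto)
qed

lemma adm_split:
  assumes "admissible R h g" "1 \<le> a" "a \<le> x" "x \<le> R"
  shows "h x = h a + integral {a..x} g"
proof -
  have R: "1 \<le> R" using assms by auto
  have gi: "g integrable_on {1..x}"
    by (rule integrable_subinterval_real[OF adm_hk(1)[OF assms(1) R]]) (use assms in auto)
  have "integral {1..a} g + integral {a..x} g = integral {1..x} g"
    by (rule Henstock_Kurzweil_Integration.integral_combine[OF assms(2,3) gi])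
  then show ?thesis using adm_hk(2)[OF assms(1) R] assms by auto
qed



lemma set_integrable_if:
  fixes u v :: "real \<Rightarrow> real"
  assumes "set_integrable lborel A u" "set_integrable lborel S v"
    "S \<in> sets lborel" "A \<in> sets lborel" "S \<subseteq> A"
  shows "set_integrable lborel A (\<lambda>x. if x \<in> S then v x else u x)"
proof -
  have "set_integrable lborel (A - S) u"
    by (rule set_integrable_subset[OF assms(1)]) (use assms in auto)
  then have "integrable lborel (\<lambda>x. indicator S x *\<^sub>R v x + indicator (A - S) x *\<^sub>R u x)"
    using assms(2) unfolding set_integrable_def by (rule Bochner_Integration.integrable_add[rotated])
  moreover have "(\<lambda>x. indicator S x *\<^sub>R v x + indicator (A - S) x *\<^sub>R u x)
      = (\<lambda>x. indicator A x *\<^sub>R (if x \<in> S then v x else u x))"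
    using assms(5) by (auto simp: indicator_def fun_eq_iff)
  ultimately show ?thesis unfolding set_integrable_def by simp
qed

lemma adm_int:
  assumes "admissible R h g" "1 \<le> R"
  shows "set_integrable lborel {1..R} (L t h g)"
    "energy t R h g = integral {1..R} (L t h g)"
proof -
  have c: "continuous_on {1..R} h" by (rule adm_cont[OF assms])
  have i1: "set_integrable lborel {1..R} (\<lambda>r. 1/2 * (r^2 * (g r)^2))"
    using assms unfolding admissible_def by auto
  have i2: "set_integrable lborel {1..R} (\<lambda>r. 3 * (h r)^2)"
    using assms unfolding admissible_def by auto
  have i3: "set_integrable lborel {1..R} (\<lambda>r. r^2 * W t (h r))"
    unfolding W_def by (intro borel_integrable_atLeastAtMost' continuous_intros c)
  have "set_integrable lborel {1..R} (\<lambda>r. 1/2 * (r^2 * (g r)^2) + 3 * (h r)^2 + r^2 * W t (h r))"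
    by (intro set_integral_add i1 i2 i3)
  then show *: "set_integrable lborel {1..R} (L t h g)"
    unfolding L_def by (simp add: field_simps)
  show "energy t R h g = integral {1..R} (L t h g)"
    unfolding energy_L using set_borel_integral_eq_integral(2)[OF *] .
qed



lemma surgery:
  fixes t R a b :: real and h g p q :: "real \<Rightarrow> real"
  assumes adm: "admissible R h g"
   and min: "\<forall>k gk. admissible R k gk \<longrightarrow> energy t R h g \<le> energy t R k gk"
   and ab: "1 \<le> a" "a < b" "b \<le> R"
   and pa: "p a = h a" and pb: "p b = h b"
   and pint: "\<forall>x\<in>{a..b}. p x = p a + integral {a..x} q"
   and qi: "set_integrable lborel {a..b} q" "set_integrable lborel {a..b} (\<lambda>r. (p r)^2)"
        "set_integrable lborel {a..b} (\<lambda>r. r^2 * (q r)^2)"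
  shows "integral {a..b} (L t h g) \<le> integral {a..b} (L t p q)"
proof -
  have R: "1 \<le> R" using ab by auto
  define k where "k x = (if x \<in> {a..b} then p x else h x)" for x
  define gk where "gk x = (if x \<in> {a<..<b} then q x else g x)" for x
  have hi: "set_integrable lborel {1..R} g" "set_integrable lborel {1..R} (\<lambda>r. (h r)^2)"
     "set_integrable lborel {1..R} (\<lambda>r. r^2 * (g r)^2)" "h 1 = 1" "h R = 1"
    using adm unfolding admissible_def by auto
  have sub1: "{a<..<b} \<subseteq> {1..R}" "{a..b} \<subseteq> {1..R}" using ab by auto
  have qi': "set_integrable lborel {a<..<b} q" "set_integrable lborel {a<..<b} (\<lambda>r. r^2 * (q r)^2)"
    by (rule set_integrable_subset[OF qi(1)]; auto)+ (rule set_integrable_subset[OF qi(3)]; auto)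
  have gki: "set_integrable lborel {1..R} gk"
    unfolding gk_def by (rule set_integrable_if[OF hi(1) qi'(1)]) (use sub1 in auto)
  have "set_integrable lborel {1..R} (\<lambda>x. if x \<in> {a..b} then (p x)^2 else (h x)^2)"
    by (rule set_integrable_if[OF hi(2) qi(2)]) (use sub1 in auto)
  then have k2i: "set_integrable lborel {1..R} (\<lambda>x. (k x)^2)"
    by (rule back_subst[of "set_integrable lborel {1..R}"]) (auto simp: k_def fun_eq_iff)
  have "set_integrable lborel {1..R} (\<lambda>x. if x \<in> {a<..<b} then x^2 * (q x)^2 else x^2 * (g x)^2)"
    by (rule set_integrable_if[OF hi(3) qi'(2)]) (use sub1 in auto)
  then have gk2i: "set_integrable lborel {1..R} (\<lambda>x. x^2 * (gk x)^2)"
    by (rule back_subst[of "set_integrable lborel {1..R}"]) (auto simp: gk_def fun_eq_iff)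
  have k1: "k 1 = 1"
  proof (cases "a = 1")
    case True then show ?thesis using pa hi(4) ab by (auto simp: k_def)
  next
    case False then show ?thesis using hi(4) ab by (auto simp: k_def)
  qed
  have kR: "k R = 1"
  proof (cases "b = R")
    case True then show ?thesis using pb hi(5) ab by (auto simp: k_def)
  next
    case False then show ?thesis using hi(5) ab by (auto simp: k_def)
  qed
  have gkI: "gk integrable_on {1..R}" using set_borel_integral_eq_integral(1)[OF gki] .
  have gI: "g integrable_on {1..R}" using set_borel_integral_eq_integral(1)[OF hi(1)] .
  have qI: "q integrable_on {a..b}" using set_borel_integral_eq_integral(1)[OF qi(1)] .
  have gkIx: "gk integrable_on {c..d}" if "1 \<le> c" "d \<le> R" for c d
    by (rule integrable_subinterval_real[OF gkI]) (use that in auto)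
  have case1: "integral {1..x} gk = integral {1..x} g" if "x \<le> a" for x
    by (rule integral_cong) (use that in \<open>auto simp: gk_def\<close>)
  have case2: "integral {1..x} gk = p x - 1" if "a \<le> x" "x \<le> b" for x
  proof -
    have "integral {1..a} gk + integral {a..x} gk = integral {1..x} gk"
      by (rule Henstock_Kurzweil_Integration.integral_combine) (use that ab in \<open>auto intro!: gkIx\<close>)
    moreover have "integral {a..x} gk = integral {a..x} q"
      by (rule integral_spike[of "{a,b}"]) (use that in \<open>auto simp: gk_def\<close>)
    moreover have "integral {1..a} gk = h a - 1"
      using case1[of a] adm_hk(2)[OF adm R, of a] ab by auto
    ultimately show ?thesis using pint that pa by auto
  qed
  have kint: "k x = 1 + integral {1..x} gk" if x: "x \<in> {1..R}" for x
  proof -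
    consider "x \<le> a" | "a \<le> x" "x \<le> b" | "b < x" by linarith
    then show ?thesis
    proof cases
      case 1
      then have "k x = h x" using pa by (auto simp: k_def)
      then show ?thesis using case1[OF 1] adm_hk(2)[OF adm R x] by simp
    next
      case 2 then show ?thesis using case2[OF 2] by (simp add: k_def)
    next
      case 3
      have "integral {1..b} gk + integral {b..x} gk = integral {1..x} gk"
        by (rule Henstock_Kurzweil_Integration.integral_combine) (use that ab 3 in \<open>auto intro!: gkIx\<close>)
      moreover have "integral {b..x} gk = integral {b..x} g"
        by (rule integral_cong) (auto simp: gk_def)
      moreover have "h x = h b + integral {b..x} g"
        by (rule adm_split[OF adm]) (use ab 3 x in auto)
      moreover have "k x = h x" using 3 by (auto simp: k_def)
      ultimately show ?thesis using case2[of b] ab pb by auto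
    qed
  qed
  have admk: "admissible R k gk"
    unfolding admissible_def
  proof (intro conjI gki k2i gk2i k1 kR ballI)
    fix x assume x: "x \<in> {1..R}"
    have "set_integrable lborel {1..x} gk"
      by (rule set_integrable_subset[OF gki]) (use x in auto)
    then show "k x = k 1 + (LINT r:{1..x}|lborel. gk r)"
      using kint[OF x] k1 set_borel_integral_eq_integral(2) by metis
  qed
  have le: "integral {1..R} (L t h g) \<le> integral {1..R} (L t k gk)"
    using min admk adm_int(2)[OF adm R] adm_int(2)[OF admk R] by metis
  have LhI: "L t h g integrable_on {1..R}" using set_borel_integral_eq_integral(1)[OF adm_int(1)[OF adm R]] .
  have LkI: "L t k gk integrable_on {1..R}" using set_borel_integral_eq_integral(1)[OF adm_int(1)[OF admk R]] .
  have split: "integral {1..R} F = integral {1..a} F + integral {a..b} F + integral {b..R} F"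
    if "F integrable_on {1..R}" for F :: "real \<Rightarrow> real"
  proof -
    have "F integrable_on {1..b}" by (rule integrable_subinterval_real[OF that]) (use ab in auto)
    then have "integral {1..a} F + integral {a..b} F = integral {1..b} F"
      by (rule Henstock_Kurzweil_Integration.integral_combine[rotated 2]) (use ab in auto)
    moreover have "integral {1..b} F + integral {b..R} F = integral {1..R} F"
      by (rule Henstock_Kurzweil_Integration.integral_combine[OF _ _ that]) (use ab in auto)
    ultimately show ?thesis by simp
  qed
  have e1: "integral {1..a} (L t k gk) = integral {1..a} (L t h g)"
    by (rule integral_cong) (use pa in \<open>auto simp: L_def k_def gk_def\<close>)
  have e3: "integral {b..R} (L t k gk) = integral {b..R} (L t h g)"
    by (rule integral_cong) (use pb in \<open>auto simp: L_def k_def gk_def\<close>)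
  have e2: "integral {a..b} (L t k gk) = integral {a..b} (L t p q)"
    by (rule integral_spike[of "{a,b}"]) (auto simp: L_def k_def gk_def)
  show ?thesis using le split[OF LhI] split[OF LkI] e1 e2 e3 by linarith
qed



lemma fubini_tri:
  fixes f g :: "real \<Rightarrow> real"
  assumes ab: "a \<le> b" and fc: "continuous_on {a..b} f" and gi: "set_integrable lborel {a..b} g"
  shows "(LBINT s:{a..b}. f s * (LBINT r:{a..s}. g r)) = (LBINT r:{a..b}. g r * (LBINT s:{r..b}. f s))"
proof -
  define fb where "fb s = indicator {a..b} s *\<^sub>R f s" for s
  define gb where "gb r = indicator {a..b} r *\<^sub>R g r" for r
  have fbm[measurable]: "fb \<in> borel_measurable lborel"
    unfolding fb_def using borel_measurable_continuous_on_indicator[OF _ fc] by simp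
  have gbi: "integrable lborel gb" using gi unfolding set_integrable_def gb_def .
  have gbm[measurable]: "gb \<in> borel_measurable lborel" using gbi by (rule borel_measurable_integrable)
  obtain M where M: "\<And>s. s \<in> {a..b} \<Longrightarrow> \<bar>f s\<bar> \<le> M"
    using compact_imp_bounded[OF compact_continuous_image[OF fc compact_Icc]]
    unfolding bounded_iff by (metis (full_types) atLeastAtMost_iff real_norm_def image_eqI)
  have fbM: "\<bar>fb s\<bar> \<le> max M 0" for s using M[of s] by (auto simp: fb_def indicator_def)
  define \<phi> where "\<phi> r s = of_bool (r \<le> s) * gb r * fb s" for r s :: real
  define \<psi> where "\<psi> r s = max M 0 * (\<bar>gb r\<bar> * indicator {a..b} s)" for r s :: real
  have \<psi>m: "case_prod \<psi> \<in> borel_measurable (lborel \<Otimes>\<^sub>M lborel)" unfolding \<psi>_def by measurable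
  have \<phi>m: "case_prod \<phi> \<in> borel_measurable (lborel \<Otimes>\<^sub>M lborel)" unfolding \<phi>_def by measurable
  have inner: "(\<integral>s. norm (\<bar>gb r\<bar> * indicator {a..b} s) \<partial>lborel) = \<bar>gb r\<bar> * (b - a)" for r
  proof -
    have "(\<integral>s. norm (\<bar>gb r\<bar> * indicator {a..b} s) \<partial>lborel) = (\<integral>s. \<bar>gb r\<bar> * indicator {a..b} s \<partial>lborel)"
      by (rule Bochner_Integration.integral_cong) (auto simp: indicator_def)
    also have "\<dots> = \<bar>gb r\<bar> * (b - a)" using ab by simp
    finally show ?thesis .
  qed
  have "integrable (lborel \<Otimes>\<^sub>M lborel) (\<lambda>(r, s). \<bar>gb r\<bar> * indicator {a..b} s)"
  proof (rule lborel_pair.Fubini_integrable)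
    show "(\<lambda>(r, s). \<bar>gb r\<bar> * indicator {a..b} s) \<in> borel_measurable (lborel \<Otimes>\<^sub>M lborel)" by measurable
    show "integrable lborel (\<lambda>r. \<integral>s. norm (case (r, s) of (r, s) \<Rightarrow> \<bar>gb r\<bar> * indicator {a..b} s) \<partial>lborel)"
      using inner gbi by simp
    have "integrable lborel (indicat_real {a..b})" by (rule integrable_real_indicator) (use ab in \<open>auto simp: emeasure_lborel_Icc\<close>)
    then show "AE x in lborel. integrable lborel (\<lambda>y. case (x, y) of (r, s) \<Rightarrow> \<bar>gb r\<bar> * indicator {a..b} s)"
      by simp
  qed
  then have \<psi>i: "integrable (lborel \<Otimes>\<^sub>M lborel) (case_prod \<psi>)"
    unfolding \<psi>_def by (simp add: case_prod_beta')
  have \<phi>i: "integrable (lborel \<Otimes>\<^sub>M lborel) (case_prod \<phi>)"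
  proof (rule Bochner_Integration.integrable_bound[OF \<psi>i \<phi>m], rule AE_I2)
    fix x :: "real \<times> real"
    obtain r s where x: "x = (r, s)" by (cases x)
    have "\<bar>fb s\<bar> \<le> max M 0 * indicator {a..b} s" using fbM[of s] by (auto simp: fb_def indicator_def)
    then have "\<bar>gb r\<bar> * \<bar>fb s\<bar> \<le> \<bar>gb r\<bar> * (max M 0 * indicator {a..b} s)"
      by (intro mult_left_mono) auto
    then show "norm (case_prod \<phi> x) \<le> norm (case_prod \<psi> x)"
      unfolding x \<phi>_def \<psi>_def by (auto simp: abs_mult mult_ac)
  qed
  have F: "(\<integral>s. (\<integral>r. \<phi> r s \<partial>lborel) \<partial>lborel) = (\<integral>r. (\<integral>s. \<phi> r s \<partial>lborel) \<partial>lborel)"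
    by (rule lborel_pair.Fubini_integral[OF \<phi>i])
  have L1: "(\<integral>r. \<phi> r s \<partial>lborel) = indicator {a..b} s * (f s * (LBINT r:{a..s}. g r))" for s
  proof (cases "s \<in> {a..b}")
    case True
    have "(\<integral>r. \<phi> r s \<partial>lborel) = (\<integral>r. indicator {a..s} r *\<^sub>R g r * f s \<partial>lborel)"
      by (rule Bochner_Integration.integral_cong) (use True in \<open>auto simp: \<phi>_def gb_def fb_def indicator_def\<close>)
    also have "\<dots> = (LBINT r:{a..s}. g r) * f s"
      unfolding set_lebesgue_integral_def by simp
    finally show ?thesis using True by simp
  next
    case False then show ?thesis by (simp add: \<phi>_def fb_def)
  qed
  have L2: "(\<integral>s. \<phi> r s \<partial>lborel) = indicator {a..b} r * (g r * (LBINT s:{r..b}. f s))" for r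
  proof (cases "r \<in> {a..b}")
    case True
    have "(\<integral>s. \<phi> r s \<partial>lborel) = (\<integral>s. g r * (indicator {r..b} s *\<^sub>R f s) \<partial>lborel)"
      by (rule Bochner_Integration.integral_cong) (use True in \<open>auto simp: \<phi>_def gb_def fb_def indicator_def\<close>)
    also have "\<dots> = g r * (LBINT s:{r..b}. f s)"
      unfolding set_lebesgue_integral_def by simp
    finally show ?thesis using True by simp
  next
    case False then show ?thesis by (simp add: \<phi>_def gb_def)
  qed
  show ?thesis using F unfolding L1 L2 set_lebesgue_integral_def by simp
qed



lemma set_integrable_mult_cont:
  fixes g c :: "real \<Rightarrow> real"
  assumes gi: "set_integrable lborel {a..b} g" and cc: "continuous_on {a..b} c"
  shows "set_integrable lborel {a..b} (\<lambda>x. g x * c x)"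
proof -
  define gb where "gb r = indicator {a..b} r *\<^sub>R g r" for r
  define cb where "cb r = indicator {a..b} r *\<^sub>R c r" for r
  have cbm[measurable]: "cb \<in> borel_measurable lborel"
    unfolding cb_def using borel_measurable_continuous_on_indicator[OF _ cc] by simp
  have gbi: "integrable lborel gb" using gi unfolding set_integrable_def gb_def .
  have gbm[measurable]: "gb \<in> borel_measurable lborel" using gbi by (rule borel_measurable_integrable)
  obtain M where M: "\<And>s. s \<in> {a..b} \<Longrightarrow> \<bar>c s\<bar> \<le> M"
    using compact_imp_bounded[OF compact_continuous_image[OF cc compact_Icc]]
    unfolding bounded_iff by (metis (full_types) atLeastAtMost_iff real_norm_def image_eqI)
  have "integrable lborel (\<lambda>x. max M 0 * gb x)" using gbi by simp
  then have "integrable lborel (\<lambda>x. gb x * cb x)"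
  proof (rule Bochner_Integration.integrable_bound)
    show "(\<lambda>x. gb x * cb x) \<in> borel_measurable lborel" by measurable
    show "AE x in lborel. norm (gb x * cb x) \<le> norm (max M 0 * gb x)"
    proof (rule AE_I2)
      fix x
      have "\<bar>cb x\<bar> \<le> max M 0" using M[of x] by (auto simp: cb_def indicator_def)
      then have "\<bar>gb x\<bar> * \<bar>cb x\<bar> \<le> \<bar>gb x\<bar> * max M 0" by (intro mult_left_mono) auto
      then show "norm (gb x * cb x) \<le> norm (max M 0 * gb x)" by (simp add: abs_mult mult_ac)
    qed
  qed
  moreover have "(\<lambda>x. gb x * cb x) = (\<lambda>x. indicator {a..b} x *\<^sub>R (g x * c x))"
    by (auto simp: gb_def cb_def indicator_def fun_eq_iff)
  ultimately show ?thesis unfolding set_integrable_def by simp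
qed

lemma ibp:
  fixes F f g h :: "real \<Rightarrow> real"
  assumes ab: "a \<le> b" and fc: "continuous_on {a..b} f"
    and Fd: "\<And>x. x \<in> {a..b} \<Longrightarrow> (F has_real_derivative f x) (at x within {a..b})"
    and gi: "set_integrable lborel {a..b} g"
    and hg: "\<And>x. x \<in> {a..b} \<Longrightarrow> h x = h a + integral {a..x} g"
  shows "((\<lambda>r. F r * g r + f r * h r) has_integral (F b * h b - F a * h a)) {a..b}"
proof -
  have gI: "g integrable_on {a..b}" using set_borel_integral_eq_integral(1)[OF gi] .
  have hc: "continuous_on {a..b} h"
  proof -
    have "continuous_on {a..b} (\<lambda>x. h a + integral {a..x} g)"
      by (intro continuous_intros indefinite_integral_continuous_1 gI)
    then show ?thesis by (rule continuous_on_eq) (metis hg)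
  qed
  have Fc: "continuous_on {a..b} F"
    using Fd DERIV_continuous continuous_on_eq_continuous_within by blast
  have FTC: "(f has_integral (F y - F x)) {x..y}" if "a \<le> x" "x \<le> y" "y \<le> b" for x y
  proof (rule fundamental_theorem_of_calculus[OF that(2)])
    fix z assume z: "z \<in> {x..y}"
    have "(F has_real_derivative f z) (at z within {a..b})" using Fd z that by auto
    then have "(F has_real_derivative f z) (at z within {x..y})"
      by (rule DERIV_subset) (use that in auto)
    then show "(F has_vector_derivative f z) (at z within {x..y})"
      using has_real_derivative_iff_has_vector_derivative by blast
  qed
  note fub = fubini_tri[OF ab fc gi]
  have l1: "(LBINT s:{a..b}. f s * (LBINT r:{a..s}. g r)) = (LBINT s:{a..b}. f s * (h s - h a))"
  proof (rule set_lebesgue_integral_cong, simp, intro allI impI)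
    fix s assume "s \<in> {a..b}" then have s: "a \<le> s" "s \<le> b" by auto
    have "set_integrable lborel {a..s} g" by (rule set_integrable_subset[OF gi]) (use s in auto)
    then have "(LBINT r:{a..s}. g r) = integral {a..s} g" by (rule set_borel_integral_eq_integral(2))
    then show "f s * (LBINT r:{a..s}. g r) = f s * (h s - h a)" using hg[of s] s by simp
  qed
  have l2: "(LBINT r:{a..b}. g r * (LBINT s:{r..b}. f s)) = (LBINT r:{a..b}. g r * (F b - F r))"
  proof (rule set_lebesgue_integral_cong, simp, intro allI impI)
    fix r assume "r \<in> {a..b}" then have r: "a \<le> r" "r \<le> b" by auto
    have "set_integrable lborel {r..b} f"
      by (rule borel_integrable_atLeastAtMost', rule continuous_on_subset[OF fc]) (use r in auto)
    then have "(LBINT s:{r..b}. f s) = integral {r..b} f" by (rule set_borel_integral_eq_integral(2))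
    also have "\<dots> = F b - F r" using FTC[of r b] r by (simp add: integral_unique)
    finally show "g r * (LBINT s:{r..b}. f s) = g r * (F b - F r)" by simp
  qed
  have i1: "set_integrable lborel {a..b} (\<lambda>s. f s * (h s - h a))"
    by (intro borel_integrable_atLeastAtMost' continuous_intros fc hc)
  have i2: "set_integrable lborel {a..b} (\<lambda>r. g r * (F b - F r))"
    by (intro set_integrable_mult_cont gi continuous_intros Fc)
  have i3: "set_integrable lborel {a..b} (\<lambda>r. g r * F r)"
    by (intro set_integrable_mult_cont gi continuous_intros Fc)
  have eq: "integral {a..b} (\<lambda>s. f s * (h s - h a)) = integral {a..b} (\<lambda>r. g r * (F b - F r))"
    using fub l1 l2 set_borel_integral_eq_integral(2)[OF i1] set_borel_integral_eq_integral(2)[OF i2] by simp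
  have I1: "(\<lambda>s. f s * h s) integrable_on {a..b}"
    by (intro integrable_continuous_interval continuous_intros fc hc)
  have I3: "(\<lambda>r. g r * F r) integrable_on {a..b}" using set_borel_integral_eq_integral(1)[OF i3] .
  have fI: "integral {a..b} f = F b - F a" using FTC[of a b] ab by (simp add: integral_unique)
  have "integral {a..b} (\<lambda>s. f s * (h s - h a)) = integral {a..b} (\<lambda>s. f s * h s) - h a * (F b - F a)"
  proof -
    have "integral {a..b} (\<lambda>s. f s * (h s - h a)) = integral {a..b} (\<lambda>s. f s * h s - h a * f s)"
      by (simp add: algebra_simps)
    also have "\<dots> = integral {a..b} (\<lambda>s. f s * h s) - integral {a..b} (\<lambda>s. h a * f s)"
      by (rule integral_diff[OF I1]) (intro integrable_continuous_interval continuous_intros fc)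
    also have "\<dots> = integral {a..b} (\<lambda>s. f s * h s) - h a * (F b - F a)"
      using fI by simp
    finally show ?thesis .
  qed
  moreover have "integral {a..b} (\<lambda>r. g r * (F b - F r)) = F b * (h b - h a) - integral {a..b} (\<lambda>r. g r * F r)"
  proof -
    have "integral {a..b} (\<lambda>r. g r * (F b - F r)) = integral {a..b} (\<lambda>r. F b * g r - g r * F r)"
      by (simp add: algebra_simps)
    also have "\<dots> = integral {a..b} (\<lambda>r. F b * g r) - integral {a..b} (\<lambda>r. g r * F r)"
      by (rule integral_diff[OF _ I3]) (intro integrable_on_mult_right gI)
    also have "\<dots> = F b * (h b - h a) - integral {a..b} (\<lambda>r. g r * F r)"
      using hg[of b] ab by simp
    finally show ?thesis .
  qed
  ultimately have key: "integral {a..b} (\<lambda>r. g r * F r) + integral {a..b} (\<lambda>s. f s * h s) = F b * h b - F a * h a"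
    using eq by (simp add: algebra_simps)
  have "((\<lambda>r. g r * F r + f r * h r) has_integral
      (integral {a..b} (\<lambda>r. g r * F r) + integral {a..b} (\<lambda>s. f s * h s))) {a..b}"
    by (intro has_integral_add integrable_integral I1 I3)
  then show ?thesis using key by (simp add: mult.commute)
qed



definition deta :: "real \<Rightarrow> real \<Rightarrow> real" where
  "deta R r = (2 * (R^3 - 1) * r - 3 * (R^2 - 1) * R^3 / r^4) / (R^5 - 1)"

lemma eta_deriv:
  assumes "r > 0" "R > 1" shows "(eta R has_real_derivative deta R r) (at r)"
proof -
  have R5: "R^5 - 1 \<noteq> 0" using one_less_power[OF assms(2), of 5] by simp
  have "((\<lambda>r. 1 / (R^5 - 1) * ((R^3 - 1) * r^2 + (R^2 - 1) * (R^3 * inverse (r^3))))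
        has_real_derivative 1 / (R^5 - 1) * ((R^3 - 1) * (2 * r) + (R^2 - 1) * (R^3 * (- (inverse (r^3) * (3 * r^2) * inverse (r^3))))))
        (at r)"
    using assms R5 by (intro derivative_eq_intros) auto
  moreover have "(\<lambda>r. 1 / (R^5 - 1) * ((R^3 - 1) * r^2 + (R^2 - 1) * (R^3 * inverse (r^3)))) = eta R"
    by (auto simp: eta_def fun_eq_iff power_mult_distrib power_inverse divide_inverse)
  moreover have k: "inverse (r^3) * (3 * r^2) * inverse (r^3) = 3 / r^4"
    using assms by (simp add: field_simps eval_nat_numeral)
  moreover have "1 / (R^5 - 1) * ((R^3 - 1) * (2 * r) + (R^2 - 1) * (R^3 * (- (3 / r^4)))) = deta R r"
    using assms R5 unfolding deta_def by (simp add: field_simps)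
  ultimately show ?thesis by simp
qed

lemma Feta_deriv:
  assumes "r > 0" "R > 1" shows "((\<lambda>r. r^2 * deta R r) has_real_derivative 6 * eta R r) (at r)"
proof -
  have R5: "R^5 \<noteq> 1" using one_less_power[OF assms(2), of 5] by simp
  have "((\<lambda>r. (2 * (R^3 - 1) * r^3 - 3 * (R^2 - 1) * R^3 * inverse (r^2)) / (R^5 - 1))
        has_real_derivative (2 * (R^3 - 1) * (3 * r^2) - 3 * (R^2 - 1) * R^3 * (- (inverse (r^2) * (2 * r) * inverse (r^2)))) / (R^5 - 1))
        (at r)"
    using assms R5 by (intro derivative_eq_intros) auto
  moreover have "\<And>r. r > 0 \<Longrightarrow> (2 * (R^3 - 1) * r^3 - 3 * (R^2 - 1) * R^3 * inverse (r^2)) / (R^5 - 1) = r^2 * deta R r"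
    using assms R5 unfolding deta_def by (simp add: field_simps eval_nat_numeral)
  moreover have "(2 * (R^3 - 1) * (3 * r^2) - 3 * (R^2 - 1) * R^3 * (- (inverse (r^2) * (2 * r) * inverse (r^2)))) / (R^5 - 1) = 6 * eta R r"
    using assms R5 unfolding eta_def by (simp add: field_simps eval_nat_numeral)
  ultimately have D: "((\<lambda>r. (2 * (R^3 - 1) * r^3 - 3 * (R^2 - 1) * R^3 * inverse (r^2)) / (R^5 - 1))
        has_real_derivative 6 * eta R r) (at r)" by simp
  have ev: "eventually (\<lambda>x. (2 * (R^3 - 1) * x^3 - 3 * (R^2 - 1) * R^3 * inverse (x^2)) / (R^5 - 1) = x^2 * deta R x) (nhds r)"
    using eventually_nhds_in_open[of "{0<..}" r] assms(1) \<open>\<And>r. r > 0 \<Longrightarrow> _ = _\<close>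
    by (auto elim!: eventually_mono)
  show ?thesis using DERIV_cong_ev[OF refl ev refl] D by simp
qed

lemma eta_le_1:
  assumes "1 < R" "1 \<le> r" "r \<le> R" shows "eta R r \<le> 1"
proof -
  define c where "c = R^3 - 1"
  define d where "d = R^5 - 1"
  define e where "e = (R^2 - 1) * R^3"
  have R1: "R^5 > 1" using assms by (simp add: one_less_power)
  have r0: "r > 0" using assms by simp
  have id: "d * r^3 - c * r^5 - e = (r - 1) * (R - r) *
      (c * r^3 + c * (1 + R) * r^2 + R * (R + 1) * (R^2 - 1) * r + (1 + R) * (R^3 - R^2))"
    unfolding c_def d_def e_def by (simp add: algebra_simps eval_nat_numeral)
  have "c \<ge> 0" unfolding c_def using assms by (simp add: one_le_power)
  moreover have "R^2 - 1 \<ge> 0" using assms by (simp add: one_le_power)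
  moreover have "R^3 - R^2 \<ge> 0" using assms by (simp add: power_increasing)
  ultimately have "0 \<le> c * r^3 + c * (1 + R) * r^2 + R * (R + 1) * (R^2 - 1) * r + (1 + R) * (R^3 - R^2)"
    using assms by (intro add_nonneg_nonneg mult_nonneg_nonneg) auto
  then have p: "0 \<le> d * r^3 - c * r^5 - e" unfolding id using assms by (intro mult_nonneg_nonneg) auto
  have "eta R r = (c * r^5 + e) / (d * r^3)"
  proof -
    have "r^5 = r^2 * r^3" by (simp flip: power_add)
    then show ?thesis
      unfolding eta_def c_def d_def e_def using r0 R1 by (simp add: field_simps power_divide)
  qed
  also have "\<dots> \<le> 1" using p R1 r0 unfolding d_def by (simp add: divide_le_eq_1)
  finally show ?thesis .
qed

lemma eta_one: "R > 1 \<Longrightarrow> eta R 1 = 1" "R > 1 \<Longrightarrow> eta R R = 1"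
proof -
  assume R: "R > 1"
  have "1 < R^5" using R by (simp add: one_less_power)
  then have R1: "R^5 - 1 \<noteq> 0" by simp
  have p: "R^2 * R^3 = R^5" by (simp flip: power_add)
  have "(R^3 - 1) * 1^2 + (R^2 - 1) * (R / 1)^3 = R^5 - 1" using p by (simp add: algebra_simps)
  then show "eta R 1 = 1" unfolding eta_def using R1 by simp
  have "(R^3 - 1) * R^2 + (R^2 - 1) * (R / R)^3 = R^5 - 1" using p R by (simp add: algebra_simps)
  then show "eta R R = 1" unfolding eta_def using R1 by simp
qed



lemma component_left:
  fixes \<phi> :: "real \<Rightarrow> real"
  assumes c: "continuous_on {lo..r0} \<phi>" and lr: "lo \<le> r0" and p: "\<phi> lo \<ge> 0" and n: "\<phi> r0 < 0"
  shows "\<exists>a. lo \<le> a \<and> a < r0 \<and> \<phi> a = 0 \<and> (\<forall>x\<in>{a<..r0}. \<phi> x < 0)"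
proof -
  define S where "S = {lo..r0} \<inter> \<phi> -` {0..}"
  have cl: "closed S" unfolding S_def by (rule continuous_closed_preimage[OF c]) auto
  have ne: "S \<noteq> {}" "lo \<in> S" using lr p by (auto simp: S_def)
  have bd: "bdd_above S" unfolding S_def by (rule bdd_aboveI[of _ r0]) auto
  define a where "a = Sup S"
  have aS: "a \<in> S" unfolding a_def by (rule closed_contains_Sup[OF ne(1) bd cl])
  have up: "x \<le> a" if "x \<in> S" for x unfolding a_def by (rule cSup_upper[OF that bd])
  have a1: "lo \<le> a" "a \<le> r0" "\<phi> a \<ge> 0" using aS by (auto simp: S_def)
  have a2: "a < r0" using a1 n by (cases "a = r0") auto
  have neg: "\<forall>x\<in>{a<..r0}. \<phi> x < 0"
  proof
    fix x assume x: "x \<in> {a<..r0}"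
    show "\<phi> x < 0"
    proof (rule ccontr)
      assume "\<not> \<phi> x < 0"
      then have "x \<in> S" using x a1 by (auto simp: S_def)
      then show False using up x by force
    qed
  qed
  have "\<phi> a = 0"
  proof (rule ccontr)
    assume ne0: "\<phi> a \<noteq> 0"
    have "continuous_on {a..r0} \<phi>" by (rule continuous_on_subset[OF c]) (use a1 in auto)
    then obtain x where x: "a \<le> x" "x \<le> r0" "\<phi> x = 0"
      using IVT2'[of \<phi> r0 0 a] n a1 a2 by auto
    then have "x \<in> S" using a1 by (auto simp: S_def)
    then have "x = a" using up x by force
    then show False using x ne0 by simp
  qed
  then show ?thesis using a1 a2 neg by blast
qed

lemma component_right:
  fixes \<phi> :: "real \<Rightarrow> real"
  assumes c: "continuous_on {r0..hi} \<phi>" and lr: "r0 \<le> hi" and p: "\<phi> hi \<ge> 0" and n: "\<phi> r0 < 0"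
  shows "\<exists>b. r0 < b \<and> b \<le> hi \<and> \<phi> b = 0 \<and> (\<forall>x\<in>{r0..<b}. \<phi> x < 0)"
proof -
  define S where "S = {r0..hi} \<inter> \<phi> -` {0..}"
  have cl: "closed S" unfolding S_def by (rule continuous_closed_preimage[OF c]) auto
  have ne: "S \<noteq> {}" "hi \<in> S" using lr p by (auto simp: S_def)
  have bd: "bdd_below S" unfolding S_def by (rule bdd_belowI[of _ r0]) auto
  define b where "b = Inf S"
  have bS: "b \<in> S" unfolding b_def by (rule closed_contains_Inf[OF ne(1) bd cl])
  have lw: "b \<le> x" if "x \<in> S" for x unfolding b_def by (rule cInf_lower[OF that bd])
  have b1: "b \<le> hi" "r0 \<le> b" "\<phi> b \<ge> 0" using bS by (auto simp: S_def)
  have b2: "r0 < b" using b1 n by (cases "b = r0") auto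
  have neg: "\<forall>x\<in>{r0..<b}. \<phi> x < 0"
  proof
    fix x assume x: "x \<in> {r0..<b}"
    show "\<phi> x < 0"
    proof (rule ccontr)
      assume "\<not> \<phi> x < 0"
      then have "x \<in> S" using x b1 by (auto simp: S_def)
      then show False using lw x by force
    qed
  qed
  have "\<phi> b = 0"
  proof (rule ccontr)
    assume ne0: "\<phi> b \<noteq> 0"
    have "continuous_on {r0..b} \<phi>" by (rule continuous_on_subset[OF c]) (use b1 in auto)
    then obtain x where x: "r0 \<le> x" "x \<le> b" "\<phi> x = 0"
      using IVT'[of \<phi> r0 0 b] n b1 b2 by auto
    then have "x \<in> S" using b1 by (auto simp: S_def)
    then have "x = b" using lw x by force
    then show False using x ne0 by simp
  qed
  then show ?thesis using b1 b2 neg by blast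
qed

lemma component:
  fixes \<phi> :: "real \<Rightarrow> real"
  assumes c: "continuous_on {1..R} \<phi>" and p1: "\<phi> 1 \<ge> 0" and pR: "\<phi> R \<ge> 0"
    and r0: "r0 \<in> {1..R}" and n: "\<phi> r0 < 0"
  shows "\<exists>a b. 1 \<le> a \<and> a < b \<and> b \<le> R \<and> \<phi> a = 0 \<and> \<phi> b = 0 \<and> (\<forall>x\<in>{a<..<b}. \<phi> x < 0)"
proof -
  obtain a where a: "1 \<le> a" "a < r0" "\<phi> a = 0" "\<forall>x\<in>{a<..r0}. \<phi> x < 0"
    using component_left[of 1 r0 \<phi>] continuous_on_subset[OF c, of "{1..r0}"] r0 p1 n by auto
  obtain b where b: "r0 < b" "b \<le> R" "\<phi> b = 0" "\<forall>x\<in>{r0..<b}. \<phi> x < 0"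
    using component_right[of r0 R \<phi>] continuous_on_subset[OF c, of "{r0..R}"] r0 pR n by auto
  have "\<forall>x\<in>{a<..<b}. \<phi> x < 0"
  proof
    fix x assume "x \<in> {a<..<b}"
    then show "\<phi> x < 0" using a(4) b(4) by (cases "x \<le> r0") auto
  qed
  then show ?thesis using a b by (intro exI[of _ a] exI[of _ b]) auto
qed

lemma integral_neg_strict:
  fixes f :: "real \<Rightarrow> real"
  assumes c: "continuous_on {a..b} f" and ab: "a < b" and n: "\<forall>x\<in>{a<..<b}. f x < 0"
  shows "integral {a..b} f < 0"
proof -
  have "integral {a..b} f = integral {a..b} (\<lambda>x. min (f x) 0)"
    by (rule integral_spike[of "{a,b}"]) (use n in auto)
  also have "\<dots> \<le> integral {a..b} (\<lambda>x. 0)"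
    by (intro integral_le integrable_continuous_interval continuous_intros c) auto
  finally have le: "integral {a..b} f \<le> 0" by simp
  have "integral {a..b} f \<noteq> 0"
  proof
    assume z: "integral {a..b} f = 0"
    have fi: "f integrable_on {a..b}" by (rule integrable_continuous_interval[OF c])
    have "((\<lambda>x. - f x) has_integral 0) (cbox a b)"
      using has_integral_neg[OF integrable_integral[OF fi]] z by simp
    moreover have "continuous_on (cbox a b) (\<lambda>x. - f x)" using c by (auto intro!: continuous_intros)
    moreover have "\<And>x. x \<in> box a b \<Longrightarrow> 0 \<le> - f x"
    proof -
      fix x assume "x \<in> box a b"
      then have "x \<in> {a<..<b}" by simp
      then show "0 \<le> - f x" using n by fastforce
    qed
    moreover have "box a b \<noteq> {}" using ab by simp
    moreover have "(a + b) / 2 \<in> cbox a b" using ab by simp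
    ultimately have "- f ((a + b) / 2) = 0"
      using has_integral_0_cbox_imp_0[of a b "\<lambda>x. - f x" "(a + b) / 2"] by blast
    moreover have "f ((a + b) / 2) < 0" using n ab by auto
    ultimately show False by simp
  qed
  then show ?thesis using le by simp
qed

lemma W_nonneg: "t \<ge> 0 \<Longrightarrow> W t x \<ge> 0"
proof -
  assume t: "t \<ge> 0"
  have "1 + 3 * x^4 - 4 * x^3 = (x - 1)^2 * (3 * x^2 + 2 * x + 1)"
    by (simp add: algebra_simps eval_nat_numeral)
  also have "\<dots> \<ge> 0"
  proof -
    have "3 * x^2 + 2 * x + 1 = 2 * x^2 + (x + 1)^2" by (simp add: algebra_simps eval_nat_numeral)
    moreover have "0 \<le> 2 * x^2 + (x + 1)^2" by simp
    ultimately have "3 * x^2 + 2 * x + 1 \<ge> 0" by linarith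
    then show ?thesis by simp
  qed
  finally show ?thesis unfolding W_def using t hplus_pos[OF t] by simp
qed

lemma W_one: "W t 1 = 0" unfolding W_def by simp

lemma W_reflect: "W t (- x) = W t x + hplus t * x^3"
  unfolding W_def by (simp add: algebra_simps)

lemma W_decr:
  assumes t: "t \<ge> 0" and y: "0 \<le> y" "y < x" "x \<le> 1"
  shows "W t x < W t y"
proof -
  have "1 - x^2 \<ge> 0" using y by (simp add: power_le_one)
  moreover have "1 - x^2 \<le> 1 - y^2" using y by (simp add: power_mono)
  ultimately have A: "(1 - x^2)^2 \<le> (1 - y^2)^2" by (simp add: power_mono)
  define Q where "Q = 3 * (x*x*x + x*x*y + x*y*y + y*y*y) - 4 * (x*x + x*y + y*y)"
  have id: "(3 * x^4 - 4 * x^3) - (3 * y^4 - 4 * y^3) = (x - y) * Q"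
    unfolding Q_def by (simp add: algebra_simps eval_nat_numeral)
  have x0: "x \<ge> 0" using y by simp
  have "x*x*x \<le> x*x" using mult_left_mono[of x 1 "x*x"] y by simp
  moreover have "x*x*y \<le> x*y" using mult_right_mono[of x 1 y] mult_left_mono[of x 1 "x*y"] y x0
    by (simp add: mult_ac)
  moreover have "x*y*y \<le> y*y" using mult_right_mono[of x 1 "y*y"] y by (simp add: mult_ac)
  moreover have "y*y*y \<le> y*y" using mult_left_mono[of y 1 "y*y"] y by simp
  moreover have "0 < (x - y) * (x + 2 * y)" using y by (intro mult_pos_pos) auto
  ultimately have "Q < 0" unfolding Q_def by (simp add: algebra_simps)
  then have B: "(3 * x^4 - 4 * x^3) - (3 * y^4 - 4 * y^3) < 0"
    unfolding id using y by (simp add: mult_pos_neg)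
  have hp: "hplus t > 0" using hplus_pos[OF t] by simp
  have "W t x - W t y = t / 8 * ((1 - x^2)^2 - (1 - y^2)^2) + hplus t / 8 * ((3 * x^4 - 4 * x^3) - (3 * y^4 - 4 * y^3))"
    unfolding W_def by (simp add: algebra_simps)
  also have "\<dots> < 0"
  proof -
    have "t / 8 * ((1 - x^2)^2 - (1 - y^2)^2) \<le> 0" using A t by (simp add: mult_nonneg_nonpos)
    moreover have "hplus t / 8 * ((3 * x^4 - 4 * x^3) - (3 * y^4 - 4 * y^3)) < 0"
      using B hp by (simp add: mult_pos_neg)
    ultimately show ?thesis by simp
  qed
  finally show ?thesis by simp
qed


lemma aux:
  fixes r d e G H We Wh :: real
  shows "r^2/2*d^2 + 3*e^2 + r^2*We \<le> r^2/2*G^2 + 3*H^2 + r^2*Wh + ((r^2*d*d + 6*e*e) - (r^2*d*G + 6*e*H)) + r^2*(We - Wh)"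
proof -
  have "0 \<le> r^2/2*(d-G)^2 + 3*(e-H)^2" by simp
  moreover have "r^2/2*G^2 + 3*H^2 + r^2*Wh + ((r^2*d*d + 6*e*e) - (r^2*d*G + 6*e*H)) + r^2*(We - Wh)
     - (r^2/2*d^2 + 3*e^2 + r^2*We) = r^2/2*(d-G)^2 + 3*(e-H)^2"
    by (simp add: algebra_simps power2_eq_square)
  ultimately show ?thesis by linarith
qed


lemma step_nonneg:
  assumes t: "t \<ge> 0" and R: "1 < R" and adm: "admissible R h g"
    and min: "\<forall>k gk. admissible R k gk \<longrightarrow> energy t R h g \<le> energy t R k gk"
  shows "\<forall>r\<in>{1..R}. 0 \<le> h r"
proof (rule ccontr)
  assume "\<not> (\<forall>r\<in>{1..R}. 0 \<le> h r)"
  then obtain r0 where r0: "r0 \<in> {1..R}" "h r0 < 0" by force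
  have R1: "1 \<le> R" using R by simp
  have hc: "continuous_on {1..R} h" by (rule adm_cont[OF adm R1])
  have h1: "h 1 = 1" "h R = 1" using adm_hk[OF adm R1] by auto
  obtain a b where ab: "1 \<le> a" "a < b" "b \<le> R" "h a = 0" "h b = 0" "\<forall>x\<in>{a<..<b}. h x < 0"
    using component[OF hc, of r0] h1 r0 by auto
  have gi: "set_integrable lborel {a..b} g"
    by (rule set_integrable_subset[of _ "{1..R}"]) (use adm ab in \<open>auto simp: admissible_def\<close>)
  have "set_integrable lborel {a..b} (\<lambda>x. (-1) * g x)" using gi by (rule set_integrable_mult_right)
  then have qi1: "set_integrable lborel {a..b} (\<lambda>x. - g x)" by simp
  have qi2: "set_integrable lborel {a..b} (\<lambda>r. (- h r)^2)"
    by simp (rule set_integrable_subset[of _ "{1..R}"]; use adm ab in \<open>auto simp: admissible_def\<close>)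
  have qi3: "set_integrable lborel {a..b} (\<lambda>r. r^2 * (- g r)^2)"
    by simp (rule set_integrable_subset[of _ "{1..R}"]; use adm ab in \<open>auto simp: admissible_def\<close>)
  have pint: "\<forall>x\<in>{a..b}. - h x = - h a + integral {a..x} (\<lambda>x. - g x)"
  proof
    fix x assume "x \<in> {a..b}"
    then have "h x = h a + integral {a..x} g" by (intro adm_split[OF adm]) (use ab in auto)
    then show "- h x = - h a + integral {a..x} (\<lambda>x. - g x)" by (simp add: integral_neg)
  qed
  have S: "integral {a..b} (L t h g) \<le> integral {a..b} (L t (\<lambda>x. - h x) (\<lambda>x. - g x))"
    by (rule surgery[OF adm min ab(1,2,3) _ _ pint qi1 qi2 qi3]) (use ab in auto)
  have LI: "L t h g integrable_on {a..b}"
    by (rule integrable_subinterval_real[OF set_borel_integral_eq_integral(1)[OF adm_int(1)[OF adm R1]]])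
       (use ab in auto)
  have hca: "continuous_on {a..b} h" by (rule continuous_on_subset[OF hc]) (use ab in auto)
  have wI: "(\<lambda>r. r^2 * hplus t * (h r)^3) integrable_on {a..b}"
    by (intro integrable_continuous_interval continuous_intros hca)
  have "integral {a..b} (L t (\<lambda>x. - h x) (\<lambda>x. - g x)) = integral {a..b} (\<lambda>r. L t h g r + r^2 * hplus t * (h r)^3)"
    by (rule integral_cong) (simp add: L_def W_reflect algebra_simps)
  also have "\<dots> = integral {a..b} (L t h g) + integral {a..b} (\<lambda>r. r^2 * hplus t * (h r)^3)"
    by (rule integral_add[OF LI wI])
  finally have "integral {a..b} (\<lambda>r. r^2 * hplus t * (h r)^3) \<ge> 0" using S by simp
  moreover have "integral {a..b} (\<lambda>r. r^2 * hplus t * (h r)^3) < 0"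
  proof (rule integral_neg_strict)
    show "continuous_on {a..b} (\<lambda>r. r^2 * hplus t * (h r)^3)" by (intro continuous_intros hca)
    show "a < b" by fact
    show "\<forall>x\<in>{a<..<b}. x^2 * hplus t * (h x)^3 < 0"
    proof
      fix x assume x: "x \<in> {a<..<b}"
      have "(h x)^3 < 0" using ab(6) x by (simp add: power_less_zero_eq)
      moreover have "x^2 * hplus t > 0" using hplus_pos[OF t] x ab by simp
      ultimately show "x^2 * hplus t * (h x)^3 < 0" by (simp add: mult_pos_neg)
    qed
  qed
  ultimately show False by simp
qed

lemma step_le1:
  assumes t: "t \<ge> 0" and R: "1 < R" and adm: "admissible R h g"
    and min: "\<forall>k gk. admissible R k gk \<longrightarrow> energy t R h g \<le> energy t R k gk"
  shows "\<forall>r\<in>{1..R}. h r \<le> 1"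
proof (rule ccontr)
  assume "\<not> (\<forall>r\<in>{1..R}. h r \<le> 1)"
  then obtain r0 where r0: "r0 \<in> {1..R}" "1 - h r0 < 0" by force
  have R1: "1 \<le> R" using R by simp
  have hc: "continuous_on {1..R} h" by (rule adm_cont[OF adm R1])
  have h1: "h 1 = 1" "h R = 1" using adm_hk[OF adm R1] by auto
  have "continuous_on {1..R} (\<lambda>x. 1 - h x)" by (intro continuous_intros hc)
  from component[OF this, of r0] h1 r0
  obtain a b where ab: "1 \<le> a" "a < b" "b \<le> R" "1 - h a = 0" "1 - h b = 0" "\<forall>x\<in>{a<..<b}. 1 - h x < 0"
    by auto
  have c: "set_integrable lborel {a..b} (\<lambda>x. c)" for c :: real
    by (rule borel_integrable_atLeastAtMost') simp
  have c2: "set_integrable lborel {a..b} (\<lambda>x. x^2 * (0::real)^2)"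
    by (rule borel_integrable_atLeastAtMost') (intro continuous_intros)
  have S: "integral {a..b} (L t h g) \<le> integral {a..b} (L t (\<lambda>x. 1) (\<lambda>x. 0))"
    by (rule surgery[OF adm min ab(1,2,3)]) (use ab c c2 in auto)
  have "integral {a..b} (L t (\<lambda>x. 1) (\<lambda>x. 0)) = integral {a..b} (\<lambda>x. 3)"
    by (rule integral_cong) (simp add: L_def W_one)
  also have "\<dots> = 3 * (b - a)" using ab by simp
  finally have S': "integral {a..b} (L t h g) \<le> 3 * (b - a)" using S by simp
  have LI: "L t h g integrable_on {a..b}"
    by (rule integrable_subinterval_real[OF set_borel_integral_eq_integral(1)[OF adm_int(1)[OF adm R1]]])
       (use ab in auto)
  have hca: "continuous_on {a..b} h" by (rule continuous_on_subset[OF hc]) (use ab in auto)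
  have h2I: "(\<lambda>r. 3 * (h r)^2) integrable_on {a..b}"
    by (intro integrable_continuous_interval continuous_intros hca)
  have "integral {a..b} (\<lambda>r. 3 * (h r)^2) \<le> integral {a..b} (L t h g)"
  proof (rule integral_le[OF h2I LI])
    fix x assume "x \<in> {a..b}"
    show "3 * (h x)^2 \<le> L t h g x" unfolding L_def using W_nonneg[OF t, of "h x"] by simp
  qed
  moreover have "integral {a..b} (\<lambda>r. 3 - 3 * (h r)^2) < 0"
  proof (rule integral_neg_strict)
    show "continuous_on {a..b} (\<lambda>r. 3 - 3 * (h r)^2)" by (intro continuous_intros hca)
    show "a < b" by fact
    show "\<forall>x\<in>{a<..<b}. 3 - 3 * (h x)^2 < 0"
    proof
      fix x assume x: "x \<in> {a<..<b}"
      then have "1 < h x" using ab(6) by auto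
      then have "1 < (h x)^2" by (simp add: one_less_power)
      then show "3 - 3 * (h x)^2 < 0" by simp
    qed
  qed
  moreover have "integral {a..b} (\<lambda>r. 3 - 3 * (h r)^2) = integral {a..b} (\<lambda>r. 3) - integral {a..b} (\<lambda>r. 3 * (h r)^2)"
    by (rule integral_diff[OF _ h2I]) (intro integrable_continuous_interval continuous_intros)
  ultimately show False using S' ab by simp
qed

lemma step_eta:
  assumes t: "t \<ge> 0" and R: "1 < R" and adm: "admissible R h g"
    and min: "\<forall>k gk. admissible R k gk \<longrightarrow> energy t R h g \<le> energy t R k gk"
    and nn: "\<forall>r\<in>{1..R}. 0 \<le> h r"
  shows "\<forall>r\<in>{1..R}. eta R r \<le> h r"
proof (rule ccontr)
  assume "\<not> (\<forall>r\<in>{1..R}. eta R r \<le> h r)"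
  then obtain r0 where r0: "r0 \<in> {1..R}" "h r0 - eta R r0 < 0" by force
  have R1: "1 \<le> R" using R by simp
  have hc: "continuous_on {1..R} h" by (rule adm_cont[OF adm R1])
  have h1: "h 1 = 1" "h R = 1" using adm_hk[OF adm R1] by auto
  have etad: "\<And>x. 0 < x \<Longrightarrow> (eta R has_real_derivative deta R x) (at x)" using eta_deriv R by blast
  have etac: "continuous_on S (eta R)" if "S \<subseteq> {0<..}" for S
    by (intro continuous_at_imp_continuous_on ballI DERIV_isCont[OF etad]) (use that in auto)
  have detac: "continuous_on S (deta R)" if "S \<subseteq> {0<..}" for S
  proof -
    have "R^5 \<noteq> 1" using one_less_power[OF R, of 5] by simp
    then show ?thesis unfolding deta_def using that by (intro continuous_intros) auto
  qed
  have "continuous_on {1..R} (\<lambda>x. h x - eta R x)" by (intro continuous_intros hc etac) auto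
  from component[OF this, of r0] h1 r0 eta_one[OF R]
  obtain a b where ab: "1 \<le> a" "a < b" "b \<le> R" "h a - eta R a = 0" "h b - eta R b = 0"
    "\<forall>x\<in>{a<..<b}. h x - eta R x < 0"
    by auto
  have sab: "{a..b} \<subseteq> {0<..}" using ab by auto
  have ec: "continuous_on {a..b} (eta R)" by (rule etac[OF sab])
  have dc: "continuous_on {a..b} (deta R)" by (rule detac[OF sab])
  have pint: "\<forall>x\<in>{a..b}. eta R x = eta R a + integral {a..x} (deta R)"
  proof
    fix x assume x: "x \<in> {a..b}"
    have "(deta R has_integral (eta R x - eta R a)) {a..x}"
    proof (rule fundamental_theorem_of_calculus)
      show "a \<le> x" using x by simp
      fix y assume "y \<in> {a..x}"
      then have "0 < y" using ab by simp
      then show "(eta R has_vector_derivative deta R y) (at y within {a..x})"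
        using etad has_real_derivative_iff_has_vector_derivative has_field_derivative_at_within by blast
    qed
    then show "eta R x = eta R a + integral {a..x} (deta R)" by (simp add: integral_unique)
  qed
  have qi1: "set_integrable lborel {a..b} (deta R)" by (rule borel_integrable_atLeastAtMost'[OF dc])
  have qi2: "set_integrable lborel {a..b} (\<lambda>r. (eta R r)^2)"
    by (rule borel_integrable_atLeastAtMost') (intro continuous_intros ec)
  have qi3: "set_integrable lborel {a..b} (\<lambda>r. r^2 * (deta R r)^2)"
    by (rule borel_integrable_atLeastAtMost') (intro continuous_intros dc)
  have S: "integral {a..b} (L t h g) \<le> integral {a..b} (L t (eta R) (deta R))"
    by (rule surgery[OF adm min ab(1,2,3) _ _ pint qi1 qi2 qi3]) (use ab in auto)
  define Fe where "Fe r = r^2 * deta R r" for r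
  define fe where "fe r = 6 * eta R r" for r
  have fec: "continuous_on {a..b} fe" unfolding fe_def by (intro continuous_intros ec)
  have Fed: "(Fe has_real_derivative fe x) (at x within {a..b})" if "x \<in> {a..b}" for x
  proof -
    have "0 < x" using that ab by simp
    then have "(Fe has_real_derivative fe x) (at x)"
      unfolding Fe_def fe_def using Feta_deriv R by blast
    then show ?thesis by (rule has_field_derivative_at_within)
  qed
  have gi: "set_integrable lborel {a..b} g"
    by (rule set_integrable_subset[of _ "{1..R}"]) (use adm ab in \<open>auto simp: admissible_def\<close>)
  have I1: "((\<lambda>r. Fe r * deta R r + fe r * eta R r) has_integral (Fe b * eta R b - Fe a * eta R a)) {a..b}"
  proof (rule ibp[OF _ fec Fed qi1])
    show "a \<le> b" using ab by simp
    fix x assume "x \<in> {a..b}"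
    then show "eta R x = eta R a + integral {a..x} (deta R)" by (rule bspec[OF pint])
  qed
  have I2: "((\<lambda>r. Fe r * g r + fe r * h r) has_integral (Fe b * h b - Fe a * h a)) {a..b}"
  proof (rule ibp[OF _ fec Fed gi])
    show "a \<le> b" using ab by simp
    fix x assume "x \<in> {a..b}"
    then show "h x = h a + integral {a..x} g" by (intro adm_split[OF adm]) (use ab in auto)
  qed
  have LI: "L t h g integrable_on {a..b}"
    by (rule integrable_subinterval_real[OF set_borel_integral_eq_integral(1)[OF adm_int(1)[OF adm R1]]])
       (use ab in auto)
  have hca: "continuous_on {a..b} h" by (rule continuous_on_subset[OF hc]) (use ab in auto)
  define w where "w r = r^2 * (W t (eta R r) - W t (h r))" for r
  have wc: "continuous_on {a..b} w" unfolding w_def W_def by (intro continuous_intros hca ec)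
  have wI: "(w has_integral integral {a..b} w) {a..b}"
    by (intro integrable_integral integrable_continuous_interval wc)
  have wneg: "integral {a..b} w < 0"
  proof (rule integral_neg_strict[OF wc ab(2)])
    show "\<forall>x\<in>{a<..<b}. w x < 0"
    proof
      fix x assume x: "x \<in> {a<..<b}"
      have "0 \<le> h x" using nn x ab by auto
      moreover have "h x < eta R x" using ab(6) x by auto
      moreover have "eta R x \<le> 1" using eta_le_1[OF R] x ab by auto
      ultimately have "W t (eta R x) < W t (h x)" by (rule W_decr[OF t])
      moreover have "0 < x^2" using x ab by simp
      ultimately show "w x < 0" unfolding w_def by (simp add: mult_pos_neg)
    qed
  qed
  have big: "((\<lambda>r. L t h g r + ((Fe r * deta R r + fe r * eta R r) - (Fe r * g r + fe r * h r)) + w r)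
     has_integral (integral {a..b} (L t h g) + ((Fe b * eta R b - Fe a * eta R a) - (Fe b * h b - Fe a * h a)) + integral {a..b} w)) {a..b}"
    by (intro has_integral_add has_integral_diff integrable_integral LI I1 I2 wI)
  have LeI: "(L t (eta R) (deta R) has_integral integral {a..b} (L t (eta R) (deta R))) {a..b}"
    unfolding L_def W_def by (intro integrable_integral integrable_continuous_interval continuous_intros ec dc) auto
  have "integral {a..b} (L t (eta R) (deta R)) \<le>
     integral {a..b} (L t h g) + ((Fe b * eta R b - Fe a * eta R a) - (Fe b * h b - Fe a * h a)) + integral {a..b} w"
  proof (rule has_integral_le[OF LeI big])
    fix r assume "r \<in> {a..b}"
    have sq: "0 \<le> r^2 / 2 * (deta R r - g r)^2 + 3 * (eta R r - h r)^2" by simp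
    show "L t (eta R) (deta R) r \<le> L t h g r + ((Fe r * deta R r + fe r * eta R r) - (Fe r * g r + fe r * h r)) + w r"
      unfolding L_def Fe_def fe_def w_def by (rule aux)
  qed
  moreover have "(Fe b * eta R b - Fe a * eta R a) - (Fe b * h b - Fe a * h a) = 0"
    using ab by simp
  ultimately show False using S wneg by simp
qed


theorem proposition3p2:
  fixes t Rstar R :: real and h :: "real \<Rightarrow> real"
  assumes "t \<ge> 0"
    and "Rstar > 1"
    and "\<forall>R'\<in>{1<..Rstar}. \<forall>r\<in>{1..R'}. eta R' r \<ge> 2/3"
    and "1 < R" and "R \<le> Rstar"
    and "is_minimizer t R h"
  shows "\<forall>r\<in>{1..R}. 2/3 \<le> eta R r \<and> eta R r \<le> h r \<and> h r \<le> 1"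
proof -
  from assms(6) obtain g where adm: "admissible R h g"
    and min: "\<forall>k gk. admissible R k gk \<longrightarrow> energy t R h g \<le> energy t R k gk"
    unfolding is_minimizer_def by blast
  note nn = step_nonneg[OF assms(1) assms(4) adm min]
  note le1 = step_le1[OF assms(1) assms(4) adm min]
  note eh = step_eta[OF assms(1) assms(4) adm min nn]
  show ?thesis
  proof
    fix r assume r: "r \<in> {1..R}"
    have "R \<in> {1<..Rstar}" using assms(4,5) by simp
    then have "2/3 \<le> eta R r" using assms(3) r by blast
    then show "2/3 \<le> eta R r \<and> eta R r \<le> h r \<and> h r \<le> 1" using le1 eh r by blast
  qed
qed

end
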